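(* Let $x\in\mathbf{Q}_2$, $v\in V$ with $vx=x$, and $\varphi\in\mathrm{Stab}_N(\mathbf{Q}_2)$. Then $(\varphi v\varphi^{-1})'(\varphi(x))=v'(x)$.
   Context: Cantor space $\mathfrak C=\{0,1\}^{\mathbf N}$; $C_m=\{m\cdot x\}$ for a finite word $m$. Thompson's group $V$: homeomorphisms $v$ of $\mathfrak C$ with $v(m_kx)=m'_kx$ for two partitions $\mathfrak C=\bigsqcup_k C_{m_k}=\bigsqcup_k C_{m'_k}$; slope $v'(x)=2^{|m_k|-|m'_k|}$ for $x\in C_{m_k}$. $\mathbf{Q}_2\subset\mathfrak C$ is the set of eventually-zero sequences. $\mathrm{Stab}_N(\mathbf{Q}_2)=\{\varphi\in\mathrm{Homeo}(\mathfrak C):\varphi V\varphi^{-1}=V,\ \varphi(\mathbf{Q}_2)=\mathbf{Q}_2\}$. *)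

theory Defs
  imports "HOL-Analysis.Analysis"
begin

text \<open>Cantor space: infinite binary sequences, with digit 0 = False, 1 = True.\<close>
type_synonym cantor = "nat \<Rightarrow> bool"

definition cantor_top :: "cantor topology" where
  "cantor_top = product_topology (\<lambda>_. discrete_topology (UNIV :: bool set)) UNIV"

definition wcat :: "bool list \<Rightarrow> cantor \<Rightarrow> cantor" where
  "wcat m x = (\<lambda>n. if n < length m then m ! n else x (n - length m))"

definition cyl :: "bool list \<Rightarrow> cantor set" where
  "cyl m = range (wcat m)"

definition cyl_partition :: "bool list list \<Rightarrow> bool" where
  "cyl_partition ms \<longleftrightarrow> distinct ms \<and> (\<Union>m\<in>set ms. cyl m) = UNIV \<and>
     (\<forall>i<length ms. \<forall>j<length ms. i \<noteq> j \<longrightarrow> cyl (ms ! i) \<inter> cyl (ms ! j) = {})"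

definition thompson_rep :: "bool list list \<Rightarrow> bool list list \<Rightarrow> (cantor \<Rightarrow> cantor) \<Rightarrow> bool" where
  "thompson_rep ms ms' v \<longleftrightarrow> length ms = length ms' \<and> cyl_partition ms \<and> cyl_partition ms' \<and>
     (\<forall>k<length ms. \<forall>x. v (wcat (ms ! k) x) = wcat (ms' ! k) x)"

definition thompsonV :: "(cantor \<Rightarrow> cantor) set" where
  "thompsonV = {v. homeomorphic_map cantor_top cantor_top v \<and> (\<exists>ms ms'. thompson_rep ms ms' v)}"

definition slope :: "(cantor \<Rightarrow> cantor) \<Rightarrow> cantor \<Rightarrow> real" where
  "slope v x = (THE s. \<exists>ms ms' k. thompson_rep ms ms' v \<and> k < length ms \<and> x \<in> cyl (ms ! k) \<and>
      s = 2 powr (real (length (ms ! k)) - real (length (ms' ! k))))"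

definition Q2 :: "cantor set" where
  "Q2 = {x. \<exists>N. \<forall>n\<ge>N. \<not> x n}"

definition StabN_Q2 :: "(cantor \<Rightarrow> cantor) set" where
  "StabN_Q2 = {\<phi>. homeomorphic_map cantor_top cantor_top \<phi> \<and>
      (\<lambda>v. \<phi> \<circ> v \<circ> inv \<phi>) ` thompsonV = thompsonV \<and> \<phi> ` Q2 = Q2}"

end

theory Submission
  imports Defs
begin


definition pre :: "cantor \<Rightarrow> nat \<Rightarrow> bool list" where
  "pre y n = map y [0..<n]"

definition sh :: "nat \<Rightarrow> cantor \<Rightarrow> cantor" where
  "sh n y = (\<lambda>i. y (n + i))"

lemma length_pre[simp]: "length (pre y n) = n"
  by (simp add: pre_def)

lemma nth_pre[simp]: "i < n \<Longrightarrow> pre y n ! i = y i"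
  by (simp add: pre_def)

lemma wcat_wcat: "wcat p (wcat q y) = wcat (p @ q) y"
  by (auto simp: wcat_def nth_append fun_eq_iff)

lemma pre_eq_iff: "pre y n = w \<longleftrightarrow> length w = n \<and> (\<forall>i<n. y i = w ! i)"
  by (auto simp: pre_def intro: nth_equalityI)

lemma cyl_iff: "y \<in> cyl w \<longleftrightarrow> pre y (length w) = w"
proof
  assume "y \<in> cyl w"
  then obtain r where "y = wcat w r" by (auto simp: cyl_def)
  then show "pre y (length w) = w" by (auto simp: wcat_def pre_eq_iff)
next
  assume h: "pre y (length w) = w"
  have "y = wcat w (sh (length w) y)"
    using h by (auto simp: wcat_def sh_def fun_eq_iff pre_eq_iff)
  then show "y \<in> cyl w" by (auto simp: cyl_def)
qed

lemma cyl_decomp: "y \<in> cyl w \<Longrightarrow> y = wcat w (sh (length w) y)"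
  by (auto simp: cyl_iff wcat_def sh_def fun_eq_iff pre_eq_iff)

lemma cyl_iff2: "y \<in> cyl w \<longleftrightarrow> (\<forall>i<length w. y i = w ! i)"
  by (simp add: cyl_iff pre_eq_iff)

lemma wcat_in_cyl[simp]: "wcat w r \<in> cyl w"
  by (auto simp: cyl_def)

lemma sh_wcat[simp]: "sh (length w) (wcat w r) = r"
  by (auto simp: sh_def wcat_def fun_eq_iff)

lemma wcat_inj: "wcat w r = wcat w r' \<Longrightarrow> r = r'"
  by (metis sh_wcat)

lemma pre_wcat: "pre (wcat m r) (length m + j) = m @ pre r j"
  by (auto simp: wcat_def intro!: nth_equalityI simp: nth_append)

lemma pre_add: "pre z (n + j) = pre z n @ pre (sh n z) j"
  by (auto simp: pre_eq_iff sh_def nth_append)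

lemma pre_zero: "(\<forall>i\<ge>N. \<not> z i) \<Longrightarrow> N \<le> M \<Longrightarrow> pre z (M + k) = pre z M @ replicate k False"
  by (auto simp: pre_eq_iff nth_append)

lemma pre_agree: "pre y M = pre y' M \<Longrightarrow> i < M \<Longrightarrow> y i = y' i"
  by (metis nth_pre)

lemma topspace_cantor[simp]: "topspace cantor_top = UNIV"
  by (simp add: cantor_top_def)

lemma cyl_PiE: "cyl w = PiE UNIV (\<lambda>i. if i < length w then {w ! i} else UNIV)"
proof (rule set_eqI)
  fix x
  have h: "(\<forall>i. x i \<in> (if i < length w then {w ! i} else UNIV)) \<longleftrightarrow> (\<forall>i<length w. x i = w ! i)"
  proof
    assume h: "\<forall>i. x i \<in> (if i < length w then {w ! i} else UNIV)"
    show "\<forall>i<length w. x i = w ! i"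
    proof (intro allI impI)
      fix i assume "i < length w"
      then have "x i \<in> {w ! i}" using h[rule_format, of i] by simp
      then show "x i = w ! i" by simp
    qed
  next
    assume "\<forall>i<length w. x i = w ! i"
    then show "\<forall>i. x i \<in> (if i < length w then {w ! i} else UNIV)" by simp
  qed
  have "x \<in> PiE UNIV (\<lambda>i. if i < length w then {w ! i} else UNIV) \<longleftrightarrow>
      (\<forall>i. x i \<in> (if i < length w then {w ! i} else UNIV))"
    unfolding PiE_UNIV_domain Pi_iff by simp
  also have "\<dots> \<longleftrightarrow> x \<in> cyl w" using h by (simp add: cyl_iff2)
  finally show "x \<in> cyl w \<longleftrightarrow> x \<in> PiE UNIV (\<lambda>i. if i < length w then {w ! i} else UNIV)" by blast
qed

lemma open_cyl: "openin cantor_top (cyl w)"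
proof -
  have "finite {i. (if i < length w then {w ! i} else UNIV) \<noteq> (UNIV::bool set)}"
    by (rule finite_subset[of _ "{..<length w}"]) auto
  then show ?thesis
    unfolding cantor_top_def cyl_PiE openin_PiE_gen
    apply (intro disjI2 conjI)
    by simp_all
qed

lemma open_nbhd_cyl:
  assumes "openin cantor_top U" "z \<in> U"
  shows "\<exists>n. cyl (pre z n) \<subseteq> U"
proof -
  obtain V where V: "finite {i. V i \<noteq> (UNIV::bool set)}" "z \<in> PiE UNIV V" "PiE UNIV V \<subseteq> U"
  proof -
    have "\<exists>V. finite {i \<in> UNIV. V i \<noteq> topspace (discrete_topology (UNIV::bool set))} \<and>
        (\<forall>i\<in>UNIV. openin (discrete_topology UNIV) (V i)) \<and> z \<in> PiE UNIV V \<and> PiE UNIV V \<subseteq> U"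
      using assms unfolding cantor_top_def openin_product_topology_alt by blast
    then show ?thesis using that by auto
  qed
  obtain n where n: "\<forall>i\<in>{i. V i \<noteq> UNIV}. i < n"
    using V(1) finite_nat_iff_bounded by (auto simp: subset_iff)
  have "cyl (pre z n) \<subseteq> PiE UNIV V"
  proof
    fix y assume "y \<in> cyl (pre z n)"
    then have "pre y n = pre z n" by (simp add: cyl_iff)
    then have "\<And>i. i < n \<Longrightarrow> y i = z i" by (metis pre_agree)
    then show "y \<in> PiE UNIV V" using V(2) n apply (auto simp: PiE_iff)
      subgoal for i by (cases "V i = UNIV") auto
      done
  qed
  then show ?thesis using V(3) by blast
qed

lemma cyl_mono: "n \<le> m \<Longrightarrow> cyl (pre z m) \<subseteq> cyl (pre z n)"
  by (auto simp: cyl_iff2)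

lemma z_in_cyl[simp]: "z \<in> cyl (pre z n)"
  by (simp add: cyl_iff)

lemma cont_fin_dep:
  assumes "\<And>n. \<exists>M. \<forall>y y'. pre y M = pre y' M \<longrightarrow> f y n = f y' n"
  shows "continuous_map cantor_top cantor_top f"
proof -
  have *: "continuous_map cantor_top (discrete_topology UNIV) (\<lambda>x. f x k)" for k
  proof -
    obtain M where M: "\<forall>y y'. pre y M = pre y' M \<longrightarrow> f y k = f y' k" using assms by blast
    have "openin cantor_top {x. f x k \<in> U}" for U
    proof (subst openin_subopen, intro ballI)
      fix x assume x: "x \<in> {x. f x k \<in> U}"
      have "cyl (pre x M) \<subseteq> {x. f x k \<in> U}"
      proof
        fix y assume "y \<in> cyl (pre x M)"
        then have "pre y M = pre x M" by (simp add: cyl_iff)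
        then have "f y k = f x k" using M by blast
        then show "y \<in> {x. f x k \<in> U}" using x by simp
      qed
      then show "\<exists>T. openin cantor_top T \<and> x \<in> T \<and> T \<subseteq> {x. f x k \<in> U}"
        using open_cyl[of "pre x M"] z_in_cyl[of x M] by blast
    qed
    then show ?thesis unfolding continuous_map_def topspace_cantor by simp
  qed
  have "continuous_map cantor_top (product_topology (\<lambda>_. discrete_topology UNIV) UNIV) f"
    unfolding continuous_map_componentwise_UNIV using * by blast
  then show ?thesis by (simp add: cantor_top_def)
qed


lemma part_unique_idx:
  "cyl_partition ws \<Longrightarrow> i < length ws \<Longrightarrow> j < length ws \<Longrightarrow> y \<in> cyl (ws ! i) \<Longrightarrow> y \<in> cyl (ws ! j) \<Longrightarrow> i = j"
  unfolding cyl_partition_def by blast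

lemma part_exists_idx:
  assumes "cyl_partition ws" obtains k where "k < length ws" "y \<in> cyl (ws ! k)"
proof -
  have "y \<in> (\<Union>m\<in>set ws. cyl m)" using assms unfolding cyl_partition_def by simp
  then obtain m where "m \<in> set ws" "y \<in> cyl m" by blast
  then show ?thesis using that by (metis in_set_conv_nth)
qed

lemma part_char:
  "cyl_partition ws \<longleftrightarrow> distinct ws \<and> (\<forall>y. \<exists>w\<in>set ws. y \<in> cyl w) \<and>
     (\<forall>y a b. a \<in> set ws \<longrightarrow> b \<in> set ws \<longrightarrow> y \<in> cyl a \<longrightarrow> y \<in> cyl b \<longrightarrow> a = b)"
proof
  assume h: "cyl_partition ws"
  show "distinct ws \<and> (\<forall>y. \<exists>w\<in>set ws. y \<in> cyl w) \<and>
     (\<forall>y a b. a \<in> set ws \<longrightarrow> b \<in> set ws \<longrightarrow> y \<in> cyl a \<longrightarrow> y \<in> cyl b \<longrightarrow> a = b)"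
  proof (intro conjI allI impI)
    show "distinct ws" using h by (simp add: cyl_partition_def)
  next
    fix y show "\<exists>w\<in>set ws. y \<in> cyl w" using h unfolding cyl_partition_def by blast
  next
    fix y a b assume "a \<in> set ws" "b \<in> set ws" "y \<in> cyl a" "y \<in> cyl b"
    then obtain i j where "i < length ws" "j < length ws" "a = ws ! i" "b = ws ! j"
      by (metis in_set_conv_nth)
    then show "a = b" using part_unique_idx[OF h] \<open>y \<in> cyl a\<close> \<open>y \<in> cyl b\<close> by blast
  qed
next
  assume h: "distinct ws \<and> (\<forall>y. \<exists>w\<in>set ws. y \<in> cyl w) \<and>
     (\<forall>y a b. a \<in> set ws \<longrightarrow> b \<in> set ws \<longrightarrow> y \<in> cyl a \<longrightarrow> y \<in> cyl b \<longrightarrow> a = b)"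
  show "cyl_partition ws" unfolding cyl_partition_def
  proof (intro conjI allI impI)
    show "distinct ws" using h by simp
    show "(\<Union>m\<in>set ws. cyl m) = UNIV" using h by blast
  next
    fix i j assume ij: "i < length ws" "j < length ws" "i \<noteq> j"
    then have "ws ! i \<noteq> ws ! j" using h nth_eq_iff_index_eq by blast
    then show "cyl (ws ! i) \<inter> cyl (ws ! j) = {}" using h ij by (meson disjoint_iff nth_mem)
  qed
qed

definition apply_rep :: "bool list list \<Rightarrow> bool list list \<Rightarrow> cantor \<Rightarrow> cantor" where
  "apply_rep ms ms' y = (let k = (THE k. k < length ms \<and> y \<in> cyl (ms ! k)) in
      wcat (ms' ! k) (sh (length (ms ! k)) y))"

lemma apply_rep_ok:
  assumes "cyl_partition ms" "cyl_partition ms'" "length ms = length ms'"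
  shows "thompson_rep ms ms' (apply_rep ms ms')"
proof -
  have "\<forall>k<length ms. \<forall>x. apply_rep ms ms' (wcat (ms ! k) x) = wcat (ms' ! k) x"
  proof (intro allI impI)
    fix k x assume k: "k < length ms"
    have "(THE j. j < length ms \<and> wcat (ms ! k) x \<in> cyl (ms ! j)) = k"
    proof (rule the_equality)
      fix j assume "j < length ms \<and> wcat (ms ! k) x \<in> cyl (ms ! j)"
      then show "j = k" using part_unique_idx[OF assms(1)] k wcat_in_cyl by blast
    qed (use k in simp)
    then show "apply_rep ms ms' (wcat (ms ! k) x) = wcat (ms' ! k) x"
      unfolding apply_rep_def Let_def by simp
  qed
  then show ?thesis using assms unfolding thompson_rep_def by blast
qed

lemma rep_inverse:
  assumes "thompson_rep ms ms' v" "thompson_rep ms' ms g"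
  shows "g (v y) = y"
proof -
  have p: "cyl_partition ms" using assms(1) by (simp add: thompson_rep_def)
  obtain k where k: "k < length ms" "y \<in> cyl (ms ! k)" using part_exists_idx[OF p] by blast
  have y: "y = wcat (ms ! k) (sh (length (ms ! k)) y)" using k(2) by (rule cyl_decomp)
  have "v y = wcat (ms' ! k) (sh (length (ms ! k)) y)"
    using assms(1) k by (subst y) (simp add: thompson_rep_def)
  then have "g (v y) = wcat (ms ! k) (sh (length (ms ! k)) y)"
    using assms k by (simp add: thompson_rep_def)
  then show ?thesis using y by simp
qed

lemma rep_cont:
  assumes "thompson_rep ms ms' v"
  shows "continuous_map cantor_top cantor_top v"
proof (rule cont_fin_dep)
  fix n
  define Lb where "Lb = sum_list (map length ms)"
  have p: "cyl_partition ms" using assms by (simp add: thompson_rep_def)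
  have lb: "\<And>k. k < length ms \<Longrightarrow> length (ms ! k) \<le> Lb"
  proof -
    fix k assume "k < length ms"
    then have "length (ms ! k) \<in> set (map length ms)" by simp
    then show "length (ms ! k) \<le> Lb" unfolding Lb_def by (rule member_le_sum_list) simp
  qed
  have rep: "\<And>k x. k < length ms \<Longrightarrow> v (wcat (ms ! k) x) = wcat (ms' ! k) x"
    using assms by (simp add: thompson_rep_def)
  show "\<exists>M. \<forall>y y'. pre y M = pre y' M \<longrightarrow> v y n = v y' n"
  proof (intro exI allI impI)
    fix y y' assume e: "pre y (n + Lb + 1) = pre y' (n + Lb + 1)"
    have ag: "\<And>i. i < n + Lb + 1 \<Longrightarrow> y i = y' i" using e pre_agree by blast
    obtain k where k: "k < length ms" "y \<in> cyl (ms ! k)" using part_exists_idx[OF p] by blast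
    have k2: "y' \<in> cyl (ms ! k)" using k ag lb[OF k(1)] by (auto simp: cyl_iff2)
    define m where "m = ms ! k"
    define m' where "m' = ms' ! k"
    have "v y = v (wcat m (sh (length m) y))" using cyl_decomp[OF k(2)] unfolding m_def by (rule arg_cong)
    also have "\<dots> = wcat m' (sh (length m) y)" using rep k unfolding m_def m'_def by blast
    finally have vy: "v y = wcat m' (sh (length m) y)" .
    have "v y' = v (wcat m (sh (length m) y'))" using cyl_decomp[OF k2] unfolding m_def by (rule arg_cong)
    also have "\<dots> = wcat m' (sh (length m) y')" using rep k unfolding m_def m'_def by blast
    finally have vy': "v y' = wcat m' (sh (length m) y')" .
    have "length m \<le> Lb" using lb k m_def by simp
    then have "length m + (n - length m') < n + Lb + 1" by linarith
    then have "y (length m + (n - length m')) = y' (length m + (n - length m'))" using ag by blast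
    then show "v y n = v y' n" unfolding vy vy' wcat_def sh_def by (cases "n < length m'") (simp_all add: add_diff_assoc)
  qed
qed

lemma rep_homeo:
  assumes "thompson_rep ms ms' v"
  shows "homeomorphic_map cantor_top cantor_top v"
proof -
  have "thompson_rep ms' ms (apply_rep ms' ms)"
    using assms by (intro apply_rep_ok) (auto simp: thompson_rep_def)
  moreover have "thompson_rep ms' ms (apply_rep ms' ms) \<Longrightarrow> thompson_rep ms ms' v"
    using assms by simp
  ultimately have "homeomorphic_maps cantor_top cantor_top v (apply_rep ms' ms)"
    unfolding homeomorphic_maps_def using assms rep_cont[of ms ms' v] rep_cont[of ms' ms "apply_rep ms' ms"]
      rep_inverse[of ms ms' v "apply_rep ms' ms"] rep_inverse[of ms' ms "apply_rep ms' ms" v] by simp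
  then show ?thesis using homeomorphic_map_maps by blast
qed



definition G :: "(cantor \<Rightarrow> cantor) \<Rightarrow> cantor \<Rightarrow> nat \<Rightarrow> nat \<Rightarrow> nat \<Rightarrow> bool" where
  "G f z N a b \<longleftrightarrow> (\<forall>n\<ge>N. \<not> z n) \<and> (\<forall>y. f (wcat (pre z (N + a)) y) = wcat (pre z (N + b)) y)"

lemma G_zero: "G f z N a b \<Longrightarrow> n \<ge> N \<Longrightarrow> \<not> z n"
  by (simp add: G_def)

lemma G_app: "G f z N a b \<Longrightarrow> f (wcat (pre z (N + a)) y) = wcat (pre z (N + b)) y"
  by (simp add: G_def)

lemma G_shift:
  assumes "G f z N a b" shows "G f z N (a + k) (b + k)"
proof -
  have zz: "\<forall>n\<ge>N. \<not> z n" using assms by (simp add: G_def)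
  have "f (wcat (pre z (N + (a + k))) y) = wcat (pre z (N + (b + k))) y" for y
  proof -
    have e1: "pre z (N + (a + k)) = pre z (N + a) @ replicate k False"
      using pre_zero[OF zz, of "N + a" k] by (simp add: add.assoc)
    have e2: "pre z (N + (b + k)) = pre z (N + b) @ replicate k False"
      using pre_zero[OF zz, of "N + b" k] by (simp add: add.assoc)
    have "f (wcat (pre z (N + (a + k))) y) = f (wcat (pre z (N + a)) (wcat (replicate k False) y))"
      by (simp add: e1 wcat_wcat)
    also have "\<dots> = wcat (pre z (N + b)) (wcat (replicate k False) y)" using G_app[OF assms] by simp
    also have "\<dots> = wcat (pre z (N + (b + k))) y" by (simp add: e2 wcat_wcat)
    finally show ?thesis .
  qed
  then show ?thesis using zz by (simp add: G_def)
qed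

lemma G_mono:
  assumes "G f z N a b" "N \<le> M" shows "G f z M a b"
proof -
  obtain d where M: "M = N + d" using assms(2) le_Suc_ex by blast
  have "G f z N (a + d) (b + d)" by (rule G_shift[OF assms(1)])
  then show ?thesis unfolding G_def M by (simp add: add.commute add.left_commute)
qed

lemma wcat_pre_eq:
  assumes zz: "\<forall>n\<ge>N. \<not> z n" and "N \<le> s" "N \<le> t"
    and e: "wcat (pre z s) (\<lambda>_. True) = wcat (pre z t) (\<lambda>_. True)"
  shows "s = t"
proof (rule ccontr)
  assume "s \<noteq> t"
  then consider "s < t" | "t < s" by linarith
  then show False
  proof cases
    case 1
    have "wcat (pre z s) (\<lambda>_. True) s = True" by (simp add: wcat_def)
    moreover have "wcat (pre z t) (\<lambda>_. True) s = False" using 1 zz assms(2) by (simp add: wcat_def)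
    ultimately show False using e by simp
  next
    case 2
    have "wcat (pre z t) (\<lambda>_. True) t = True" by (simp add: wcat_def)
    moreover have "wcat (pre z s) (\<lambda>_. True) t = False" using 2 zz assms(3) by (simp add: wcat_def)
    ultimately show False using e by simp
  qed
qed

lemma G_unique:
  assumes "G f z N a b" "G f z N' a' b'"
  shows "int a - int b = int a' - int b'"
proof -
  define M where "M = N + N'"
  have g1: "G f z M (a + a') (b + a')" using G_shift[OF G_mono[OF assms(1)], of M a'] M_def by simp
  have g2: "G f z M (a + a') (b' + a)" using G_shift[OF G_mono[OF assms(2)], of M a] M_def
    by (simp add: add.commute)
  have zz: "\<forall>n\<ge>N. \<not> z n" using assms(1) by (simp add: G_def)
  have ee: "wcat (pre z (M + (b + a'))) (\<lambda>_. True) = wcat (pre z (M + (b' + a))) (\<lambda>_. True)"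
    using G_app[OF g1, of "\<lambda>_. True"] G_app[OF g2, of "\<lambda>_. True"] by simp
  have "M + (b + a') = M + (b' + a)" using wcat_pre_eq[OF zz _ _ ee] M_def by simp
  then show ?thesis by simp
qed

lemma G_comp_same:
  assumes "G f z N a b" "G g z N a' b'"
  shows "G (f \<circ> g) z N (a' + a) (b + b')"
proof -
  have g: "G g z N (a' + a) (b' + a)" using G_shift[OF assms(2)] by simp
  have f: "G f z N (a + b') (b + b')" using G_shift[OF assms(1)] by simp
  have "(f \<circ> g) (wcat (pre z (N + (a' + a))) y) = wcat (pre z (N + (b + b'))) y" for y
    using G_app[OF g, of y] G_app[OF f, of y] by (simp add: add.commute)
  then show ?thesis using assms(1) by (simp add: G_def)
qed

lemma G_comp:
  assumes "G f z N a b" "G g z N' a' b'"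
  shows "\<exists>M. G (f \<circ> g) z M (a' + a) (b + b')"
  using G_comp_same[OF G_mono[OF assms(1), of "N + N'"] G_mono[OF assms(2), of "N + N'"]] by auto

lemma G_pow:
  assumes "G f z N a b" shows "G (f ^^ n) z N (n * a) (n * b)"
proof (induction n)
  case 0
  then show ?case using assms by (simp add: G_def)
next
  case (Suc n)
  have "G (f \<circ> f ^^ n) z N (n * a + a) (b + n * b)" by (rule G_comp_same[OF assms Suc])
  then show ?case by (metis funpow.simps(2) add.commute mult_Suc)
qed

definition near :: "(cantor \<Rightarrow> cantor) \<Rightarrow> (cantor \<Rightarrow> cantor) \<Rightarrow> cantor \<Rightarrow> bool" where
  "near f g z \<longleftrightarrow> (\<exists>n. \<forall>y. f (wcat (pre z n) y) = g (wcat (pre z n) y))"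

lemma near_G:
  assumes "near f g z" "G f z N a b" shows "\<exists>M. G g z M a b"
proof -
  obtain n where n: "\<forall>y. f (wcat (pre z n) y) = g (wcat (pre z n) y)" using assms(1) near_def by blast
  define M where "M = N + n"
  have gf: "G f z M a b" using G_mono[OF assms(2)] M_def by simp
  have "g (wcat (pre z (M + a)) y) = wcat (pre z (M + b)) y" for y
  proof -
    have "M + a = n + (M + a - n)" using M_def by simp
    then have e: "pre z (M + a) = pre z n @ pre (sh n z) (M + a - n)"
      by (metis pre_add)
    have "g (wcat (pre z (M + a)) y) = g (wcat (pre z n) (wcat (pre (sh n z) (M + a - n)) y))"
      by (simp add: e wcat_wcat)
    also have "\<dots> = f (wcat (pre z n) (wcat (pre (sh n z) (M + a - n)) y))" using n by simp
    also have "\<dots> = f (wcat (pre z (M + a)) y)" by (simp add: e wcat_wcat)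
    also have "\<dots> = wcat (pre z (M + b)) y" by (rule G_app[OF gf])
    finally show ?thesis .
  qed
  then have "G g z M a b" using gf by (simp add: G_def)
  then show ?thesis by blast
qed

lemma G_near:
  assumes "G f z N a b" "G g z N' a' b'" "int a - int b = int a' - int b'"
  shows "near f g z"
proof -
  define M where "M = N + N'"
  have g1: "G f z M (a + a') (b + a')" using G_shift[OF G_mono[OF assms(1)], of M a'] M_def by simp
  have g2: "G g z M (a + a') (b' + a)" using G_shift[OF G_mono[OF assms(2)], of M a] M_def
    by (simp add: add.commute)
  have "b + a' = b' + a" using assms(3) by linarith
  then have "\<forall>y. f (wcat (pre z (M + (a + a'))) y) = g (wcat (pre z (M + (a + a'))) y)"
    using G_app[OF g1] G_app[OF g2] by simp
  then show ?thesis unfolding near_def by blast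
qed



lemma homeo_bij:
  assumes "homeomorphic_map cantor_top cantor_top \<phi>"
  shows "inj \<phi>" "surj \<phi>" "\<And>x. inv \<phi> (\<phi> x) = x" "\<And>x. \<phi> (inv \<phi> x) = x"
proof -
  show i: "inj \<phi>" using homeomorphic_imp_injective_map[OF assms] by simp
  show s: "surj \<phi>" using homeomorphic_imp_surjective_map[OF assms] by simp
  show "\<And>x. inv \<phi> (\<phi> x) = x" using i by (simp add: inv_f_f)
  show "\<And>x. \<phi> (inv \<phi> x) = x" using s by (simp add: surj_f_inv_f)
qed

lemma cj_comp:
  assumes "\<And>x. inv \<phi> (\<phi> x) = x"
  shows "\<phi> \<circ> (f \<circ> g) \<circ> inv \<phi> = (\<phi> \<circ> f \<circ> inv \<phi>) \<circ> (\<phi> \<circ> g \<circ> inv \<phi>)"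
  using assms by (simp add: fun_eq_iff)

lemma cj_pow:
  assumes "\<And>x. inv \<phi> (\<phi> x) = x" "\<And>x. \<phi> (inv \<phi> x) = x"
  shows "\<phi> \<circ> (f ^^ n) \<circ> inv \<phi> = (\<phi> \<circ> f \<circ> inv \<phi>) ^^ n"
proof (induction n)
  case 0
  then show ?case using assms by (simp add: fun_eq_iff)
next
  case (Suc n)
  have "\<phi> \<circ> (f ^^ Suc n) \<circ> inv \<phi> = \<phi> \<circ> (f \<circ> f ^^ n) \<circ> inv \<phi>" by simp
  also have "\<dots> = (\<phi> \<circ> f \<circ> inv \<phi>) \<circ> (\<phi> \<circ> f ^^ n \<circ> inv \<phi>)" by (rule cj_comp[OF assms(1)])
  also have "\<dots> = (\<phi> \<circ> f \<circ> inv \<phi>) ^^ Suc n" using Suc.IH by (simp only: funpow.simps(2))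
  finally show ?case .
qed

lemma near_conj:
  assumes h: "homeomorphic_map cantor_top cantor_top \<phi>" and nr: "near f g z"
  shows "near (\<phi> \<circ> f \<circ> inv \<phi>) (\<phi> \<circ> g \<circ> inv \<phi>) (\<phi> z)"
proof -
  obtain n where n: "\<forall>y. f (wcat (pre z n) y) = g (wcat (pre z n) y)" using nr near_def by blast
  have "openin cantor_top (\<phi> ` cyl (pre z n))"
    using homeomorphic_imp_open_map[OF h] open_cyl unfolding open_map_def by blast
  moreover have "\<phi> z \<in> \<phi> ` cyl (pre z n)" by simp
  ultimately obtain m where m: "cyl (pre (\<phi> z) m) \<subseteq> \<phi> ` cyl (pre z n)" using open_nbhd_cyl by blast
  have "(\<phi> \<circ> f \<circ> inv \<phi>) (wcat (pre (\<phi> z) m) y) = (\<phi> \<circ> g \<circ> inv \<phi>) (wcat (pre (\<phi> z) m) y)" for y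
  proof -
    have "wcat (pre (\<phi> z) m) y \<in> \<phi> ` cyl (pre z n)" using m wcat_in_cyl by blast
    then obtain c where c: "c \<in> cyl (pre z n)" "wcat (pre (\<phi> z) m) y = \<phi> c" by blast
    have ic: "inv \<phi> (wcat (pre (\<phi> z) m) y) = c" using c(2) homeo_bij(3)[OF h] by simp
    have "c = wcat (pre z n) (sh n c)" using cyl_decomp[OF c(1)] by simp
    then have "f c = g c" using n by metis
    then show ?thesis using ic by simp
  qed
  then show ?thesis unfolding near_def by blast
qed

definition Pstab :: "(cantor \<Rightarrow> cantor) \<Rightarrow> cantor \<Rightarrow> bool" where
  "Pstab f z \<longleftrightarrow> (\<forall>W. openin cantor_top W \<and> z \<in> W \<longrightarrow>
      (\<exists>U. openin cantor_top U \<and> z \<in> U \<and> U \<subseteq> W \<and> f ` U \<subseteq> U))"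

lemma G_contr_P:
  assumes g: "G f z N a b" and ab: "a \<le> b"
  shows "Pstab f z"
  unfolding Pstab_def
proof (intro allI impI)
  fix W assume W: "openin cantor_top W \<and> z \<in> W"
  then obtain n where n: "cyl (pre z n) \<subseteq> W" using open_nbhd_cyl by blast
  define M where "M = N + n"
  have gm: "G f z M a b" using G_mono[OF g] M_def by simp
  define U where "U = cyl (pre z (M + a))"
  have "U \<subseteq> cyl (pre z n)" unfolding U_def by (rule cyl_mono) (simp add: M_def)
  moreover have "f ` U \<subseteq> U"
  proof
    fix x assume "x \<in> f ` U"
    then obtain y where y: "y \<in> U" "x = f y" by blast
    have "y = wcat (pre z (M + a)) (sh (M + a) y)" using cyl_decomp[of y "pre z (M + a)"] y(1) U_def by simp
    then have "f y = wcat (pre z (M + b)) (sh (M + a) y)" using G_app[OF gm] by metis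
    then have "x \<in> cyl (pre z (M + b))" using y(2) wcat_in_cyl by simp
    then show "x \<in> U" unfolding U_def using cyl_mono[of "M + a" "M + b" z] ab by auto
  qed
  ultimately show "\<exists>U. openin cantor_top U \<and> z \<in> U \<and> U \<subseteq> W \<and> f ` U \<subseteq> U"
    using n open_cyl U_def by (intro exI[of _ U]) auto
qed

lemma G_exp_notP:
  assumes g: "G f z N a b" and ab: "b < a"
  shows "\<not> Pstab f z"
proof
  assume P: "Pstab f z"
  have zz: "\<forall>n\<ge>N. \<not> z n" using g by (simp add: G_def)
  define W where "W = cyl (pre z (N + a))"
  obtain U where U: "openin cantor_top U" "z \<in> U" "U \<subseteq> W" "f ` U \<subseteq> U"
    using P open_cyl[of "pre z (N + a)"] unfolding Pstab_def W_def by (meson z_in_cyl)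
  obtain m where m: "cyl (pre z m) \<subseteq> U" using open_nbhd_cyl U(1,2) by blast
  define s where "s i = wcat (pre z (N + i)) (\<lambda>_. True)" for i
  have sW: "i \<ge> a" if "s i \<in> W" for i
  proof (rule ccontr)
    assume "\<not> i \<ge> a"
    then have "N + i < length (pre z (N + a))" by simp
    then have "s i (N + i) = pre z (N + a) ! (N + i)" using that unfolding W_def cyl_iff2 by blast
    moreover have "s i (N + i) = True" unfolding s_def by (simp add: wcat_def)
    moreover have "pre z (N + a) ! (N + i) = False" using zz \<open>\<not> i \<ge> a\<close> by simp
    ultimately show False by simp
  qed
  have ex: "s (a + m) \<in> U"
  proof -
    have "s (a + m) \<in> cyl (pre z (N + (a + m)))" unfolding s_def by simp
    then have "s (a + m) \<in> cyl (pre z m)" using cyl_mono[of m "N + (a + m)" z] by auto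
    then show ?thesis using m by blast
  qed
  define i0 where "i0 = (LEAST i. s i \<in> U)"
  have i0U: "s i0 \<in> U" unfolding i0_def using ex by (rule LeastI)
  have "i0 \<ge> a" using sW i0U U(3) by blast
  then obtain j where j: "i0 = a + j" using le_Suc_ex by blast
  have gj: "G f z N (a + j) (b + j)" by (rule G_shift[OF g])
  have "f (s i0) = s (b + j)" unfolding s_def j using G_app[OF gj] by simp
  then have "s (b + j) \<in> U" using i0U U(4) by (metis image_subset_iff)
  then have "i0 \<le> b + j" unfolding i0_def by (rule Least_le)
  then show False using j ab by simp
qed

lemma P_conj_back:
  assumes h: "homeomorphic_map cantor_top cantor_top \<phi>" and P: "Pstab (\<phi> \<circ> f \<circ> inv \<phi>) (\<phi> z)"
  shows "Pstab f z"
  unfolding Pstab_def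
proof (intro allI impI)
  fix W assume W: "openin cantor_top W \<and> z \<in> W"
  have "openin cantor_top (\<phi> ` W)" using homeomorphic_imp_open_map[OF h] W unfolding open_map_def by blast
  then obtain U' where U': "openin cantor_top U'" "\<phi> z \<in> U'" "U' \<subseteq> \<phi> ` W" "(\<phi> \<circ> f \<circ> inv \<phi>) ` U' \<subseteq> U'"
    using P W unfolding Pstab_def by blast
  define U where "U = {x \<in> topspace cantor_top. \<phi> x \<in> U'}"
  have oU: "openin cantor_top U"
    unfolding U_def by (rule openin_continuous_map_preimage[OF homeomorphic_imp_continuous_map[OF h] U'(1)])
  have "U \<subseteq> W"
  proof
    fix x assume "x \<in> U"
    then have "\<phi> x \<in> \<phi> ` W" using U' U_def by auto
    then show "x \<in> W" using homeo_bij(1)[OF h] by (auto dest: injD)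
  qed
  moreover have "f ` U \<subseteq> U"
  proof
    fix x assume "x \<in> f ` U"
    then obtain y where y: "y \<in> U" "x = f y" by blast
    have "(\<phi> \<circ> f \<circ> inv \<phi>) (\<phi> y) = \<phi> (f y)" using homeo_bij(3)[OF h] by simp
    then have "\<phi> (f y) \<in> U'" using U'(4) y(1) U_def by (metis (no_types, lifting) image_subset_iff mem_Collect_eq)
    then show "x \<in> U" using y U_def by simp
  qed
  ultimately show "\<exists>U. openin cantor_top U \<and> z \<in> U \<and> U \<subseteq> W \<and> f ` U \<subseteq> U"
    using oU U'(2) U_def by (intro exI[of _ U]) auto
qed



lemma rep_G:
  assumes rep: "thompson_rep ms ms' f" and k: "k < length ms" and zc: "z \<in> cyl (ms ! k)"
    and fz: "f z = z" and zz: "\<forall>n\<ge>N. \<not> z n"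
  shows "G f z N (length (ms ! k)) (length (ms' ! k))"
proof -
  define m where "m = ms ! k"
  define m' where "m' = ms' ! k"
  have repk: "\<And>x. f (wcat m x) = wcat m' x" using rep k unfolding thompson_rep_def m_def m'_def by blast
  obtain r where hz: "z = wcat m r" using zc unfolding cyl_def m_def by blast
  have hz2: "z = wcat m' r" using fz repk hz by metis
  have e1: "pre z (N + length m) = m @ pre r N" using pre_wcat[of m r N] hz by (simp add: add.commute)
  have e2: "pre z (N + length m') = m' @ pre r N" using pre_wcat[of m' r N] hz2 by (simp add: add.commute)
  have "f (wcat (pre z (N + length m)) y) = wcat (pre z (N + length m')) y" for y
    unfolding e1 e2 by (simp add: wcat_wcat[symmetric] repk)
  then show ?thesis using zz unfolding G_def m_def m'_def by blast
qed

lemma V_G: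
  assumes "f \<in> thompsonV" "f z = z" "z \<in> Q2"
  shows "\<exists>N a b. G f z N a b"
proof -
  obtain ms ms' where rep: "thompson_rep ms ms' f" using assms(1) unfolding thompsonV_def by blast
  then have p: "cyl_partition ms" by (simp add: thompson_rep_def)
  obtain k where k: "k < length ms" "z \<in> cyl (ms ! k)" using part_exists_idx[OF p] by blast
  obtain N where zz: "\<forall>n\<ge>N. \<not> z n" using assms(3) unfolding Q2_def by blast
  show ?thesis using rep_G[OF rep k assms(2) zz] by blast
qed

lemma slope_G:
  assumes fV: "f \<in> thompsonV" and fz: "f z = z" and g: "G f z N a b"
  shows "slope f z = 2 powr (real a - real b)"
proof -
  have zz: "\<forall>n\<ge>N. \<not> z n" using g by (simp add: G_def)
  have key: "real (length (ms ! k)) - real (length (ms' ! k)) = real a - real b"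
    if "thompson_rep ms ms' f" "k < length ms" "z \<in> cyl (ms ! k)" for ms ms' k
  proof -
    have "int (length (ms ! k)) - int (length (ms' ! k)) = int a - int b"
      using G_unique[OF rep_G[OF that fz zz] g] .
    then have "real_of_int (int (length (ms ! k)) - int (length (ms' ! k))) = real_of_int (int a - int b)"
      by simp
    then show ?thesis by simp
  qed
  obtain ms ms' where rep: "thompson_rep ms ms' f" using fV unfolding thompsonV_def by blast
  then have p: "cyl_partition ms" by (simp add: thompson_rep_def)
  obtain k where k: "k < length ms" "z \<in> cyl (ms ! k)" using part_exists_idx[OF p] by blast
  show ?thesis unfolding slope_def
  proof (rule the_equality)
    show "\<exists>ms ms' k. thompson_rep ms ms' f \<and> k < length ms \<and> z \<in> cyl (ms ! k) \<and>
        2 powr (real a - real b) = 2 powr (real (length (ms ! k)) - real (length (ms' ! k)))"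
      using rep k key[OF rep k] by metis
  next
    fix s assume "\<exists>ms ms' k. thompson_rep ms ms' f \<and> k < length ms \<and> z \<in> cyl (ms ! k) \<and>
        s = 2 powr (real (length (ms ! k)) - real (length (ms' ! k)))"
    then show "s = 2 powr (real a - real b)" using key by metis
  qed
qed

lemma cyl_append: "y \<in> cyl (P @ q) \<longleftrightarrow> y \<in> cyl P \<and> sh (length P) y \<in> cyl q"
proof
  assume h: "y \<in> cyl (P @ q)"
  then have a: "\<forall>i<length P + length q. y i = (P @ q) ! i" by (simp add: cyl_iff2)
  have "\<forall>i<length P. y i = P ! i"
  proof (intro allI impI)
    fix i assume "i < length P" then show "y i = P ! i" using a[rule_format, of i] by (simp add: nth_append)
  qed
  moreover have "\<forall>i<length q. sh (length P) y i = q ! i"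
  proof (intro allI impI)
    fix i assume "i < length q" then show "sh (length P) y i = q ! i"
      using a[rule_format, of "length P + i"] by (simp add: nth_append sh_def)
  qed
  ultimately show "y \<in> cyl P \<and> sh (length P) y \<in> cyl q" by (simp add: cyl_iff2)
next
  assume "y \<in> cyl P \<and> sh (length P) y \<in> cyl q"
  then have a: "\<forall>i<length P. y i = P ! i" "\<forall>i<length q. y (length P + i) = q ! i"
    by (auto simp: cyl_iff2 sh_def)
  have "\<forall>i<length P + length q. y i = (P @ q) ! i"
  proof (intro allI impI)
    fix i assume i: "i < length P + length q"
    show "y i = (P @ q) ! i"
    proof (cases "i < length P")
      case True then show ?thesis using a(1) by (simp add: nth_append)
    next
      case False
      have "i - length P < length q" using i False by linarith
      then have "y (length P + (i - length P)) = q ! (i - length P)" using a(2) by blast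
      moreover have "length P + (i - length P) = i" using False by simp
      ultimately show ?thesis using False by (simp add: nth_append)
    qed
  qed
  then show "y \<in> cyl (P @ q)" by (simp add: cyl_iff2)
qed

definition others :: "bool list \<Rightarrow> bool list list" where
  "others P = filter (\<lambda>w. w \<noteq> P) (List.n_lists (length P) [False, True])"

lemma set_others: "set (others P) = {w. length w = length P \<and> w \<noteq> P}"
  unfolding others_def by (auto simp: set_n_lists)

lemma ext_partition:
  assumes Q: "cyl_partition Q" and Qne: "[] \<notin> set Q"
  shows "cyl_partition (map (\<lambda>q. P @ q) Q @ others P)"
proof -
  have Qc: "distinct Q" "\<forall>y. \<exists>w\<in>set Q. y \<in> cyl w"
     "\<forall>y a b. a \<in> set Q \<longrightarrow> b \<in> set Q \<longrightarrow> y \<in> cyl a \<longrightarrow> y \<in> cyl b \<longrightarrow> a = b"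
    using Q unfolding part_char by blast+
  let ?ws = "map (\<lambda>q. P @ q) Q @ others P"
  have d1: "distinct (map (\<lambda>q. P @ q) Q)" using Qc(1) by (simp add: distinct_map inj_on_def)
  have d2: "distinct (others P)" unfolding others_def by (simp add: distinct_n_lists)
  have d3: "set (map (\<lambda>q. P @ q) Q) \<inter> set (others P) = {}"
    using Qne by (auto simp: set_others)
  have dist: "distinct ?ws" using d1 d2 d3 by simp
  have ex: "\<exists>w\<in>set ?ws. y \<in> cyl w" for y
  proof (cases "pre y (length P) = P")
    case True
    obtain q where q: "q \<in> set Q" "sh (length P) y \<in> cyl q" using Qc(2) by blast
    have "y \<in> cyl P" using True by (simp add: cyl_iff)
    then have "y \<in> cyl (P @ q)" using q(2) by (simp add: cyl_append)
    then show ?thesis using q by auto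
  next
    case False
    have "pre y (length P) \<in> set (others P)" using False by (simp add: set_others)
    moreover have "y \<in> cyl (pre y (length P))" by simp
    ultimately show ?thesis by (metis UnCI set_append)
  qed
  have un: "a = b" if ab: "a \<in> set ?ws" "b \<in> set ?ws" "y \<in> cyl a" "y \<in> cyl b" for y a b
  proof -
    consider (AA) qa qb where "qa \<in> set Q" "qb \<in> set Q" "a = P @ qa" "b = P @ qb"
      | (AO) qa where "qa \<in> set Q" "a = P @ qa" "b \<in> set (others P)"
      | (OA) qb where "qb \<in> set Q" "b = P @ qb" "a \<in> set (others P)"
      | (OO) "a \<in> set (others P)" "b \<in> set (others P)"
      using ab(1,2) by auto
    then show ?thesis
    proof cases
      case AA then show ?thesis using Qc(3) ab(3,4) by (auto simp: cyl_append)
    next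
      case AO
      then have "y \<in> cyl P" using ab(3) cyl_append by blast
      then have "pre y (length P) = P" by (simp add: cyl_iff)
      moreover have "pre y (length P) = b" using AO ab(4) by (auto simp: cyl_iff set_others)
      ultimately show ?thesis using AO by (simp add: set_others)
    next
      case OA
      then have "y \<in> cyl P" using ab(4) cyl_append by blast
      then have "pre y (length P) = P" by (simp add: cyl_iff)
      moreover have "pre y (length P) = a" using OA ab(3) by (auto simp: cyl_iff set_others)
      ultimately show ?thesis using OA by (simp add: set_others)
    next
      case OO then show ?thesis using ab(3,4) by (auto simp: cyl_iff set_others)
    qed
  qed
  show ?thesis unfolding part_char using dist ex un by blast
qed

lemma partQa: "cyl_partition [[False, False], [False, True], [True]]"
  unfolding part_char
proof (intro conjI allI impI)
  fix y show "\<exists>w\<in>set [[False, False], [False, True], [True]]. y \<in> cyl w"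
    by (cases "y 0"; cases "y 1") (auto simp: cyl_iff2 less_Suc_eq)
next
  fix y a b assume "a \<in> set [[False, False], [False, True], [True]]" "b \<in> set [[False, False], [False, True], [True]]"
    "y \<in> cyl a" "y \<in> cyl b"
  then show "a = b" by (auto simp: cyl_iff2 less_Suc_eq)
qed simp

lemma partQb: "cyl_partition [[False], [True, False], [True, True]]"
  unfolding part_char
proof (intro conjI allI impI)
  fix y show "\<exists>w\<in>set [[False], [True, False], [True, True]]. y \<in> cyl w"
    by (cases "y 0"; cases "y 1") (auto simp: cyl_iff2 less_Suc_eq)
next
  fix y a b assume "a \<in> set [[False], [True, False], [True, True]]" "b \<in> set [[False], [True, False], [True, True]]"
    "y \<in> cyl a" "y \<in> cyl b"
  then show "a = b" by (auto simp: cyl_iff2 less_Suc_eq)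
qed simp

lemma construct:
  assumes "z \<in> Q2"
  shows "\<exists>u N. u \<in> thompsonV \<and> u z = z \<and> G u z N 2 1"
proof -
  obtain N where zz: "\<forall>n\<ge>N. \<not> z n" using assms unfolding Q2_def by blast
  define P where "P = pre z N"
  define ms where "ms = map (\<lambda>q. P @ q) [[False, False], [False, True], [True]] @ others P"
  define ms' where "ms' = map (\<lambda>q. P @ q) [[False], [True, False], [True, True]] @ others P"
  have p1: "cyl_partition ms" unfolding ms_def by (rule ext_partition[OF partQa]) simp
  have p2: "cyl_partition ms'" unfolding ms'_def by (rule ext_partition[OF partQb]) simp
  have rep: "thompson_rep ms ms' (apply_rep ms ms')"
    by (rule apply_rep_ok[OF p1 p2]) (simp add: ms_def ms'_def)
  define u where "u = apply_rep ms ms'"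
  have uV: "u \<in> thompsonV" unfolding thompsonV_def u_def using rep rep_homeo by blast
  have u0: "u (wcat (P @ [False, False]) x) = wcat (P @ [False]) x" for x
    using rep unfolding thompson_rep_def u_def by (auto simp: ms_def ms'_def)
  have e2: "pre z (N + 2) = P @ [False, False]" using pre_zero[OF zz, of N 2] P_def
    by (simp add: numeral_2_eq_2)
  have e1: "pre z (N + 1) = P @ [False]" using pre_zero[OF zz, of N 1] P_def by simp
  have G: "G u z N 2 1" unfolding G_def using zz u0 e1 e2 by simp
  have zw: "z = wcat (pre z (N + n)) (\<lambda>_. False)" for n
    using zz by (auto simp: wcat_def fun_eq_iff)
  have "u z = z" using G_app[OF G, of "\<lambda>_. False"] zw[of 2] zw[of 1] by metis
  then show ?thesis using uV G by blast
qed



theorem mainTheorem6: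
  assumes "x \<in> Q2" and "v \<in> thompsonV" and "v x = x" and "\<phi> \<in> StabN_Q2"
  shows "slope (\<phi> \<circ> v \<circ> inv \<phi>) (\<phi> x) = slope v x"
proof -
  have h: "homeomorphic_map cantor_top cantor_top \<phi>"
    and conjV: "(\<lambda>v. \<phi> \<circ> v \<circ> inv \<phi>) ` thompsonV = thompsonV"
    and QQ: "\<phi> ` Q2 = Q2"
    using assms(4) unfolding StabN_Q2_def by blast+
  have i1: "\<And>y. inv \<phi> (\<phi> y) = y" and i2: "\<And>y. \<phi> (inv \<phi> y) = y"
    using homeo_bij[OF h] by blast+
  have cjV: "\<phi> \<circ> f \<circ> inv \<phi> \<in> thompsonV" if "f \<in> thompsonV" for f
    using that conjV by blast
  define w where "w = \<phi> x"
  have wQ: "w \<in> Q2" using QQ assms(1) w_def by blast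
  obtain Nv a b where gv: "G v x Nv a b" using V_G[OF assms(2,3,1)] by blast
  obtain u1 N1 where u1: "u1 \<in> thompsonV" "u1 x = x" "G u1 x N1 2 1" using construct[OF assms(1)] by blast
  obtain u2 N2 where u2: "u2 \<in> thompsonV" "u2 w = w" "G u2 w N2 2 1" using construct[OF wQ] by blast
  define c1 where "c1 = \<phi> \<circ> u1 \<circ> inv \<phi>"
  have c1V: "c1 \<in> thompsonV" using cjV[OF u1(1)] c1_def by simp
  have c1w: "c1 w = w" unfolding c1_def w_def using i1 u1(2) by simp
  obtain N' a1 b1 where gc1: "G c1 w N' a1 b1" using V_G[OF c1V c1w wQ] by blast
  have a1b1: "b1 < a1"
  proof (rule ccontr)
    assume "\<not> b1 < a1"
    then have "Pstab c1 w" using G_contr_P[OF gc1] by simp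
    then have "Pstab u1 x" using P_conj_back[OF h] unfolding c1_def w_def by blast
    then show False using G_exp_notP[OF u1(3)] by simp
  qed
  have "u2 \<in> (\<lambda>v. \<phi> \<circ> v \<circ> inv \<phi>) ` thompsonV" using u2(1) conjV by simp
  then obtain t where t: "t \<in> thompsonV" "u2 = \<phi> \<circ> t \<circ> inv \<phi>" by blast
  have "\<phi> (t (inv \<phi> (\<phi> x))) = \<phi> x" using u2(2) t(2) w_def by simp
  then have "\<phi> (t x) = \<phi> x" by (simp only: i1)
  then have "inv \<phi> (\<phi> (t x)) = inv \<phi> (\<phi> x)" by simp
  then have tx: "t x = x" by (simp only: i1)
  obtain Nt a2 b2 where gt: "G t x Nt a2 b2" using V_G[OF t(1) tx assms(1)] by blast
  \<comment> \<open>the germ of c1 at w is 1\<close>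
  have g1: "int a1 - int b1 = 1"
  proof -
    obtain M1 where m1: "G (t \<circ> u1 ^^ b2) x M1 (b2 * 2 + a2) (b2 + b2 * 1)"
      using G_comp[OF gt G_pow[OF u1(3), of b2]] by blast
    have m2: "G (u1 ^^ a2) x N1 (a2 * 2) (a2 * 1)" using G_pow[OF u1(3)] .
    have "near (t \<circ> u1 ^^ b2) (u1 ^^ a2) x" by (rule G_near[OF m1 m2]) simp
    then have "near (\<phi> \<circ> (t \<circ> u1 ^^ b2) \<circ> inv \<phi>) (\<phi> \<circ> (u1 ^^ a2) \<circ> inv \<phi>) w"
      unfolding w_def by (rule near_conj[OF h])
    moreover have "\<phi> \<circ> (t \<circ> u1 ^^ b2) \<circ> inv \<phi> = u2 \<circ> c1 ^^ b2"
      unfolding cj_comp[of \<phi>, OF i1] cj_pow[of \<phi>, OF i1 i2] t(2) c1_def ..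
    moreover have "\<phi> \<circ> (u1 ^^ a2) \<circ> inv \<phi> = c1 ^^ a2"
      unfolding cj_pow[of \<phi>, OF i1 i2] c1_def ..
    ultimately have nr: "near (u2 \<circ> c1 ^^ b2) (c1 ^^ a2) w" by simp
    obtain M3 where m3: "G (u2 \<circ> c1 ^^ b2) w M3 (b2 * a1 + 2) (1 + b2 * b1)"
      using G_comp[OF u2(3) G_pow[OF gc1, of b2]] by blast
    obtain M4 where m4: "G (c1 ^^ a2) w M4 (b2 * a1 + 2) (1 + b2 * b1)" using near_G[OF nr m3] by blast
    have "int (b2 * a1 + 2) - int (1 + b2 * b1) = int (a2 * a1) - int (a2 * b1)"
      by (rule G_unique[OF m4 G_pow[OF gc1, of a2]])
    then have hh: "int b2 * int a1 + 2 - (1 + int b2 * int b1) = int a2 * int a1 - int a2 * int b1"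
      by simp
    have "(int a2 - int b2) * (int a1 - int b1) = 1"
      unfolding right_diff_distrib left_diff_distrib using hh by linarith
    then have "(int a1 - int b1) * (int a2 - int b2) = 1" by (simp add: mult.commute)
    moreover have "0 < int a1 - int b1" using a1b1 by simp
    ultimately show ?thesis using pos_zmult_eq_1_iff by blast
  qed
  define V' where "V' = \<phi> \<circ> v \<circ> inv \<phi>"
  have V'V: "V' \<in> thompsonV" using cjV[OF assms(2)] V'_def by simp
  have V'w: "V' w = w" unfolding V'_def w_def using i1 assms(3) by simp
  obtain Nw a' b' where gV': "G V' w Nw a' b'" using V_G[OF V'V V'w wQ] by blast
  have eq: "int a' - int b' = int a - int b"
  proof -
    obtain M1 where m1: "G (v \<circ> u1 ^^ b) x M1 (b * 2 + a) (b + b * 1)"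
      using G_comp[OF gv G_pow[OF u1(3), of b]] by blast
    have m2: "G (u1 ^^ a) x N1 (a * 2) (a * 1)" using G_pow[OF u1(3)] .
    have "near (v \<circ> u1 ^^ b) (u1 ^^ a) x" by (rule G_near[OF m1 m2]) simp
    then have "near (\<phi> \<circ> (v \<circ> u1 ^^ b) \<circ> inv \<phi>) (\<phi> \<circ> (u1 ^^ a) \<circ> inv \<phi>) w"
      unfolding w_def by (rule near_conj[OF h])
    moreover have "\<phi> \<circ> (v \<circ> u1 ^^ b) \<circ> inv \<phi> = V' \<circ> c1 ^^ b"
      unfolding cj_comp[of \<phi>, OF i1] cj_pow[of \<phi>, OF i1 i2] V'_def c1_def ..
    moreover have "\<phi> \<circ> (u1 ^^ a) \<circ> inv \<phi> = c1 ^^ a"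
      unfolding cj_pow[of \<phi>, OF i1 i2] c1_def ..
    ultimately have nr: "near (V' \<circ> c1 ^^ b) (c1 ^^ a) w" by simp
    obtain M3 where m3: "G (V' \<circ> c1 ^^ b) w M3 (b * a1 + a') (b' + b * b1)"
      using G_comp[OF gV' G_pow[OF gc1, of b]] by blast
    obtain M4 where m4: "G (c1 ^^ a) w M4 (b * a1 + a') (b' + b * b1)" using near_G[OF nr m3] by blast
    have "int (b * a1 + a') - int (b' + b * b1) = int (a * a1) - int (a * b1)"
      by (rule G_unique[OF m4 G_pow[OF gc1, of a]])
    then have hh: "int b * int a1 + int a' - (int b' + int b * int b1) = int a * int a1 - int a * int b1"
      by simp
    have "int b * (int a1 - int b1) + int a' - int b' = int a * (int a1 - int b1)"
      unfolding right_diff_distrib left_diff_distrib using hh by linarith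
    then show ?thesis using g1 by simp
  qed
  have "slope V' w = 2 powr (real a' - real b')" by (rule slope_G[OF V'V V'w gV'])
  moreover have "slope v x = 2 powr (real a - real b)" by (rule slope_G[OF assms(2,3) gv])
  moreover have "real a' - real b' = real a - real b"
  proof -
    have "real_of_int (int a' - int b') = real_of_int (int a - int b)" using eq by simp
    then show ?thesis by simp
  qed
  ultimately show ?thesis unfolding V'_def w_def by simp
qed


end
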